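(* Let $c\ge1$, $\eta=1+2\log c$, $V(k)=k^2-2\log k$ for $k>0$, and let $k_{\min}\le 1$ be the unique $k\le1$ with $V(k)=\eta$. Let $k_{\min}\le k_1<1$ and $0<k_0\le k_1$, and put $\bar V(k)=(1+\frac1{k_0})(k-1)^2+H$ where $H$ is chosen so that $\bar V(k_1)=V(k_1)$. Then $V(k)>\bar V(k)$ for all $k\in(k_1,1)$, and for every $k_1<k_2\le1$, \[\int_{k_1}^{k_2}\frac{dk}{\sqrt{\eta-V(k)}}>\frac{1}{\sqrt{1+\frac1{k_0}}}\left(\sin^{-1}\Big(\frac{1-k_1}{a}\Big)-\sin^{-1}\Big(\frac{1-k_2}{a}\Big)\right),\qquad a=\sqrt{\frac{\eta-H}{1+\frac1{k_0}}}.\] Moreover, if $k_1=k_{\min}$ then $a=1-k_{\min}$. *)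

theory Defs
  imports "HOL-Analysis.Analysis"
begin

definition Vpot :: "real \<Rightarrow> real" where
  "Vpot k = k^2 - 2 * ln k"

definition Vbar :: "real \<Rightarrow> real \<Rightarrow> real \<Rightarrow> real" where
  "Vbar k0 H k = (1 + 1 / k0) * (k - 1)^2 + H"

end

theory Submission
  imports Defs
begin

lemma Vpot_meas: "(\<lambda>k. 1 / sqrt (e - Vpot k)) \<in> borel_measurable borel"
  unfolding Vpot_def by measurable

lemma Vpot_meas_on: "(\<lambda>k. 1 / sqrt (e - Vpot k)) \<in> borel_measurable (lebesgue_on S)"
  by (rule measurable_restrict_space1) (use Vpot_meas in \<open>auto simp: measurable_completion\<close>)

lemma aux_alg: "2 * (inverse s / 2) / t = 1 / (t * (s::real))"
  by (simp add: inverse_eq_divide mult.commute)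

lemma Vpot_conv:
  assumes "0 < x" "x \<le> y"
  shows "Vpot x - Vpot y \<ge> (2/y - 2*y)*(y-x) + (y-x)^2"
proof -
  have y: "0 < y" using assms by simp
  have "ln (x/y) \<le> x/y - 1" using ln_le_minus_one assms y by simp
  moreover have "ln (x/y) = ln x - ln y" using assms y by (simp add: ln_div)
  moreover have "(2/y - 2*y)*(y-x) + (y-x)^2 = 2 - 2*(x/y) - y^2 + x^2"
    using y by (simp add: field_simps power2_eq_square)
  ultimately show ?thesis unfolding Vpot_def by linarith
qed

lemma D_incr:
  fixes k0 k1 k H :: real
  assumes "0 < k0" "k0 \<le> k1" "k1 < k" "k \<le> 1"
  shows "Vpot k - Vbar k0 H k > Vpot k1 - Vbar k0 H k1"
proof -
  let ?D = "\<lambda>x. Vpot x - Vbar k0 H x"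
  have k1: "0 < k1" using assms by simp
  have der: "DERIV ?D x :> (2*x - 2/x) - (1 + 1/k0) * (2*(x-1))" if "0 < x" for x
    unfolding Vpot_def Vbar_def using that assms
    by - (rule derivative_eq_intros refl | simp)+
  show ?thesis
  proof (rule DERIV_pos_imp_increasing_open[where f = ?D])
    show "k1 < k" by fact
    fix x assume x: "k1 < x" "x < k"
    have xp: "0 < x" using x k1 by simp
    have "(2*x - 2/x) - (1 + 1/k0) * (2*(x-1)) = 2*(x-1)*(1/x - 1/k0)"
      using xp assms by (simp add: field_simps)
    moreover have "1/x < 1/k0" using x assms by (simp add: field_simps)
    moreover have "x < 1" using x assms by simp
    ultimately have "(2*x - 2/x) - (1 + 1/k0) * (2*(x-1)) > 0"
      using mult_neg_neg[of "2*(x-1)" "1/x - 1/k0"] by simp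
    then show "\<exists>y. DERIV ?D x :> y \<and> y > 0" using der[OF xp] by blast
  next
    show "continuous_on {k1..k} ?D"
      unfolding Vpot_def Vbar_def using k1
      by (intro continuous_intros) auto
  qed
qed

theorem mainTheorem8:
  fixes c k0 k1 kmin :: real
  defines "\<eta> \<equiv> 1 + 2 * ln c"
  defines "H \<equiv> Vpot k1 - (1 + 1 / k0) * (k1 - 1)^2"
  defines "a \<equiv> sqrt ((\<eta> - H) / (1 + 1 / k0))"
  assumes hc: "c \<ge> 1"
    and hkmin: "0 < kmin" "kmin \<le> 1" "Vpot kmin = \<eta>"
    and hk1: "kmin \<le> k1" "k1 < 1"
    and hk0: "0 < k0" "k0 \<le> k1"
  shows "(\<forall>k\<in>{k1<..<1}. Vpot k > Vbar k0 H k)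
    \<and> (\<forall>k2. k1 < k2 \<and> k2 \<le> 1 \<longrightarrow>
          integral {k1..k2} (\<lambda>k. 1 / sqrt (\<eta> - Vpot k))
            > 1 / sqrt (1 + 1 / k0) * (arcsin ((1 - k1) / a) - arcsin ((1 - k2) / a)))
    \<and> (k1 = kmin \<longrightarrow> a = 1 - kmin)"
proof -
  define K where "K = 1 + 1 / k0"
  have K: "K > 0" unfolding K_def using hk0 by (simp add: add_pos_pos)
  have k1p: "0 < k1" using hkmin hk1 by simp
  have Vb1: "Vbar k0 H k1 = Vpot k1" unfolding Vbar_def H_def by simp
  have Dk: "Vpot k > Vbar k0 H k" if "k1 < k" "k \<le> 1" for k
    using D_incr[OF hk0 that, of H] Vb1 by simp
  have Vlt: "Vpot k < \<eta>" if "kmin < k" "k \<le> 1" for k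
  proof -
    have "Vpot kmin - Vpot k \<ge> (2/k - 2*k)*(k-kmin) + (k-kmin)^2"
      using Vpot_conv[of kmin k] hkmin that by simp
    moreover have "2/k - 2*k \<ge> 0"
    proof -
      have kp: "0 < k" using that hkmin by simp
      have "1 \<le> 1/k" using kp that by simp
      then show ?thesis using that by simp
    qed
    moreover have "(k-kmin)^2 > 0" using that by simp
    moreover have "(2/k - 2*k)*(k-kmin) \<ge> 0" using calculation(2) that by simp
    ultimately show ?thesis using hkmin that by linarith
  qed
  have V1le: "Vpot k1 \<le> \<eta>"
  proof (cases "k1 = kmin")
    case True then show ?thesis using hkmin by simp
  next
    case False then show ?thesis using Vlt[of k1] hk1 by simp
  qed
  have etaH: "\<eta> - H = (\<eta> - Vpot k1) + K * (1 - k1)^2"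
    unfolding H_def K_def by (simp add: power2_commute)
  have etaHpos: "\<eta> - H > 0"
  proof -
    have "K * (1 - k1)^2 > 0" using K hk1 by simp
    then show ?thesis using etaH V1le by linarith
  qed
  have a2: "a^2 = (\<eta> - H) / K" unfolding a_def K_def[symmetric] using etaHpos K by simp
  have apos: "a > 0" unfolding a_def K_def[symmetric] using etaHpos K by simp
  have age: "a \<ge> 1 - k1"
  proof -
    have "(\<eta> - H) / K \<ge> (1 - k1)^2" using etaH V1le K by (simp add: field_simps)
    then have "(1-k1)^2 \<le> a^2" using a2 by simp
    then show ?thesis using apos hk1 by (simp add: power2_le_iff_abs_le)
  qed
  have etaVbar: "\<eta> - Vbar k0 H k = K * (a^2 - (1 - k)^2)" for k
    unfolding Vbar_def K_def[symmetric] a2 using K by (simp add: field_simps power2_commute)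
  show ?thesis
  proof (intro conjI)
    show "\<forall>k\<in>{k1<..<1}. Vpot k > Vbar k0 H k" using Dk by auto
  next
    show "k1 = kmin \<longrightarrow> a = 1 - kmin"
    proof
      assume h: "k1 = kmin"
      have "\<eta> - H = K * (1 - k1)^2" using etaH h hkmin by simp
      then have "a^2 = (1 - kmin)^2" using a2 K h by simp
      then show "a = 1 - kmin" using apos hk1 h
        using power2_eq_iff_nonneg[of a "1 - kmin"] by simp
    qed
  next
    show "\<forall>k2. k1 < k2 \<and> k2 \<le> 1 \<longrightarrow>
          integral {k1..k2} (\<lambda>k. 1 / sqrt (\<eta> - Vpot k))
            > 1 / sqrt (1 + 1 / k0) * (arcsin ((1 - k1) / a) - arcsin ((1 - k2) / a))"
    proof (intro allI impI)
      fix k2 assume hk2: "k1 < k2 \<and> k2 \<le> 1"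
      define f where "f = (\<lambda>k. 1 / sqrt (\<eta> - Vpot k))"
      define g where "g = (\<lambda>k. 1 / sqrt (\<eta> - Vbar k0 H k))"
      define G where "G = (\<lambda>k. - arcsin ((1 - k) / a) / sqrt K)"
      define m where "m = (k1 + k2) / 2"
      have m: "k1 < m" "m < k2" "m < 1" using hk2 unfolding m_def by auto
      have posV: "\<eta> - Vpot k > 0" if "k1 < k" "k \<le> 1" for k
        using Vlt[of k] that hk1 by simp
      have fg_lt: "f k > g k" if "k1 < k" "k \<le> 1" for k
      proof -
        have "0 < \<eta> - Vpot k" using posV that by simp
        moreover have "\<eta> - Vpot k < \<eta> - Vbar k0 H k" using Dk that by simp
        ultimately show ?thesis unfolding f_def g_def
          by (simp add: divide_strict_left_mono real_sqrt_less_iff)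
      qed
      have fg_le: "g k \<le> f k" if "k \<in> {k1..k2}" for k
      proof (cases "k = k1")
        case True then show ?thesis unfolding f_def g_def using Vb1 by simp
      next
        case False then show ?thesis using fg_lt[of k] that hk2 by fastforce
      qed
      have g_int: "(g has_integral (G k2 - G k1)) {k1..k2}"
      proof (rule fundamental_theorem_of_calculus_interior)
        show "k1 \<le> k2" using hk2 by simp
        show "continuous_on {k1..k2} G"
          unfolding G_def
        proof (intro continuous_intros ballI conjI)
          fix x assume x: "x \<in> {k1..k2}"
          show "-1 \<le> (1 - x) / a" using x hk2 apos by (simp add: field_simps)
          show "(1 - x) / a \<le> 1" using x age apos by (simp add: field_simps)
        qed (use K apos in auto)
      next
        fix x assume x: "x \<in> {k1<..<k2}"
        have u0: "0 < (1 - x) / a" using x hk2 apos by simp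
        have u1: "(1 - x) / a < 1" using x age apos by (simp add: field_simps)
        have d: "((\<lambda>k. arcsin ((1 - k) / a)) has_real_derivative
                 (1 / sqrt (1 - ((1 - x)/a)^2)) * (-1/a)) (at x)"
          using u0 u1 by (auto intro!: derivative_eq_intros simp: divide_inverse)
        have pos: "a^2 - (1-x)^2 > 0"
        proof -
          have "(1-x) < a" using x age by simp
          moreover have "0 < 1 - x" using x hk2 by simp
          ultimately show ?thesis by (simp add: power_strict_mono)
        qed
        have pr: "sqrt (1 - ((1 - x)/a)^2) * a = sqrt (a^2 - (1-x)^2)"
        proof -
          have "1 - ((1 - x)/a)^2 = (a^2 - (1-x)^2) / a^2" using apos
            by (simp add: field_simps power2_eq_square)
          then have "sqrt (1 - ((1 - x)/a)^2) = sqrt (a^2 - (1-x)^2) / a"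
            using apos by (simp add: real_sqrt_divide)
          then show ?thesis using apos by simp
        qed
        have Spos: "sqrt (1 - ((1 - x)/a)^2) > 0"
        proof -
          have "((1 - x)/a)^2 < 1" using u0 u1 by (simp add: power_less_one_iff)
          then show ?thesis by simp
        qed
        have gx: "g x = 1 / (sqrt K * sqrt (a^2 - (1-x)^2))"
          unfolding g_def etaVbar real_sqrt_mult ..
        have eq: "- ((1 / sqrt (1 - ((1 - x)/a)^2)) * (-1/a)) / sqrt K = g x"
          unfolding gx pr[symmetric] using apos K Spos by (simp add: field_simps)
        have "(G has_real_derivative (- ((1 / sqrt (1 - ((1 - x)/a)^2)) * (-1/a)) / sqrt K)) (at x)"
          unfolding G_def by (intro DERIV_cdivide DERIV_minus d)
        then show "(G has_vector_derivative g x) (at x)"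
          using eq by (simp add: has_real_derivative_iff_has_vector_derivative)
      qed
      have GG: "G k2 - G k1 = 1 / sqrt (1 + 1 / k0) * (arcsin ((1 - k1) / a) - arcsin ((1 - k2) / a))"
        unfolding G_def K_def by (simp add: diff_divide_distrib)
      have f_int2: "f integrable_on {m..k2}"
      proof (rule integrable_continuous_interval)
        have "\<forall>x\<in>{m..k2}. 0 < x \<and> \<eta> - Vpot x > 0" using posV m hk2 k1p by auto
        then show "continuous_on {m..k2} f" unfolding f_def Vpot_def
          by (intro continuous_intros) auto
      qed
      define \<delta> where "\<delta> = 2/m - 2*m"
      have mp: "0 < m" using m k1p by simp
      have mm: "m * m < 1" using mult_strict_left_mono[OF m(3) mp] m(3) by simp
      have \<delta>: "\<delta> > 0" unfolding \<delta>_def using mp mm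
        by (simp add: field_simps)
      define h where "h = (\<lambda>k. 1 / sqrt (\<delta> * (k - k1)) + f k1)"
      have h_int: "h integrable_on {k1..m}"
      proof -
        have "((\<lambda>k. 1 / sqrt (\<delta> * (k - k1))) has_integral
               (2 * sqrt (m - k1) / sqrt \<delta> - 2 * sqrt (k1 - k1) / sqrt \<delta>)) {k1..m}"
        proof (rule fundamental_theorem_of_calculus_interior)
          show "k1 \<le> m" using m by simp
          show "continuous_on {k1..m} (\<lambda>k. 2 * sqrt (k - k1) / sqrt \<delta>)"
            using \<delta> by (intro continuous_intros) auto
        next
          fix x assume x: "x \<in> {k1<..<m}"
          have sd: "((\<lambda>k. sqrt (k - k1)) has_real_derivative inverse (sqrt (x - k1)) / 2) (at x)"
            using x by (auto intro!: derivative_eq_intros)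
          have "((\<lambda>k. 2 * sqrt (k - k1) / sqrt \<delta>) has_real_derivative
                 2 * (inverse (sqrt (x - k1)) / 2) / sqrt \<delta>) (at x)"
            by (intro DERIV_cdivide DERIV_cmult sd)
          moreover have "2 * (inverse (sqrt (x - k1)) / 2) / sqrt \<delta> = 1 / sqrt (\<delta> * (x - k1))"
            unfolding real_sqrt_mult by (rule aux_alg)
          ultimately show "((\<lambda>k. 2 * sqrt (k - k1) / sqrt \<delta>) has_vector_derivative
                 1 / sqrt (\<delta> * (x - k1))) (at x)"
            by (metis has_real_derivative_iff_has_vector_derivative)
        qed
        then have "(\<lambda>k. 1 / sqrt (\<delta> * (k - k1))) integrable_on {k1..m}" by (rule has_integral_integrable)
        then show ?thesis unfolding h_def by (intro integrable_add integrable_const_ivl)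
      qed
      have f_int1: "f integrable_on {k1..m}"
      proof (rule measurable_bounded_by_integrable_imp_integrable_real)
        show "f \<in> borel_measurable (lebesgue_on {k1..m})" unfolding f_def by (rule Vpot_meas_on)
        show "h integrable_on {k1..m}" by (rule h_int)
        show "{k1..m} \<in> sets lebesgue" by simp
        fix x assume x: "x \<in> {k1..m}"
        have f0: "f y \<ge> 0" if "Vpot y \<le> \<eta>" for y unfolding f_def using that by simp
        have fk1: "0 \<le> f k1" using f0 V1le by simp
        show "\<bar>f x\<bar> \<le> h x"
        proof (cases "x = k1")
          case True then show ?thesis unfolding h_def using fk1 by simp
        next
          case False
          then have xk: "k1 < x" using x by simp
          have xp: "0 < x" using xk k1p by simp
          have "Vpot k1 - Vpot x \<ge> (2/x - 2*x)*(x-k1) + (x-k1)^2"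
            using Vpot_conv[of k1 x] k1p xk by simp
          moreover have B: "2/x - 2*x \<ge> \<delta>"
          proof -
            have "2/m \<le> 2/x" using xp x by (intro divide_left_mono) auto
            then show ?thesis unfolding \<delta>_def using x by simp
          qed
          moreover have "x - k1 > 0" using xk by simp
          moreover have "(2/x - 2*x)*(x-k1) \<ge> \<delta> * (x - k1)"
            using B xk by (intro mult_right_mono) auto
          moreover have "(x-k1)^2 \<ge> 0" by simp
          ultimately have "\<eta> - Vpot x \<ge> \<delta> * (x - k1)" using V1le
            by linarith
          moreover have "\<delta> * (x - k1) > 0" using \<delta> xk by simp
          ultimately have "f x \<le> 1 / sqrt (\<delta> * (x - k1))" unfolding f_def
            by (intro divide_left_mono real_sqrt_le_mono) auto
          moreover have "\<bar>f x\<bar> = f x" using f0[of x] posV[of x] xk x m by simp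
          moreover note fk1
          ultimately show ?thesis unfolding h_def by linarith
        qed
      qed
      have f_int: "f integrable_on {k1..k2}"
        using Henstock_Kurzweil_Integration.integrable_combine[OF _ _ f_int1 f_int2] m by simp
      have g_intb: "g integrable_on {k1..k2}" using g_int by (rule has_integral_integrable)
      have gc2: "continuous_on {m..k2} (\<lambda>k. f k - g k)"
      proof -
        have "\<forall>x\<in>{m..k2}. 0 < x \<and> \<eta> - Vpot x > 0 \<and> \<eta> - Vbar k0 H x > 0"
        proof (intro ballI conjI)
          fix x assume x: "x \<in> {m..k2}"
          then have xr: "k1 < x" "x \<le> 1" using m hk2 by auto
          show "0 < x" using xr k1p by simp
          show "\<eta> - Vpot x > 0" using posV[OF xr] .
          show "\<eta> - Vbar k0 H x > 0" using posV[OF xr] Dk[OF xr] by simp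
        qed
        then show ?thesis unfolding f_def g_def Vpot_def Vbar_def
          by (intro continuous_intros) auto
      qed
      obtain x0 where x0: "x0 \<in> {m..k2}" "\<forall>y\<in>{m..k2}. f x0 - g x0 \<le> f y - g y"
        using continuous_attains_inf[OF compact_Icc _ gc2] m by auto
      define \<epsilon> where "\<epsilon> = f x0 - g x0"
      have \<epsilon>: "\<epsilon> > 0" unfolding \<epsilon>_def using fg_lt[of x0] x0 m hk2 by auto
      have I2: "integral {m..k2} (\<lambda>k. f k - g k) \<ge> \<epsilon> * (k2 - m)"
      proof -
        have "integral {m..k2} (\<lambda>k. \<epsilon>) \<le> integral {m..k2} (\<lambda>k. f k - g k)"
          by (rule integral_le) (use x0 \<epsilon>_def
            integrable_continuous_interval[OF gc2] in auto)
        then show ?thesis using m by (simp add: mult.commute)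
      qed
      have dint: "(\<lambda>k. f k - g k) integrable_on {k1..k2}"
        using f_int g_intb by (rule Henstock_Kurzweil_Integration.integrable_diff)
      have I1: "integral {k1..m} (\<lambda>k. f k - g k) \<ge> 0"
        by (rule integral_nonneg)
          (use integrable_on_subinterval[OF dint] m hk2 fg_le in auto)
      have "integral {k1..k2} (\<lambda>k. f k - g k) =
            integral {k1..m} (\<lambda>k. f k - g k) + integral {m..k2} (\<lambda>k. f k - g k)"
        using Henstock_Kurzweil_Integration.integral_combine[OF _ _ dint, of m] m by simp
      then have "integral {k1..k2} (\<lambda>k. f k - g k) > 0"
      proof -
        have "\<epsilon> * (k2 - m) > 0" using \<epsilon> m by simp
        then show ?thesis using I1 I2 \<open>integral {k1..k2} (\<lambda>k. f k - g k) = _\<close> by linarith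
      qed
      then have "integral {k1..k2} f > integral {k1..k2} g"
        using Henstock_Kurzweil_Integration.integral_diff[OF f_int g_intb] by simp
      moreover have "integral {k1..k2} g = G k2 - G k1" using g_int by (rule integral_unique)
      ultimately show "integral {k1..k2} (\<lambda>k. 1 / sqrt (\<eta> - Vpot k))
            > 1 / sqrt (1 + 1 / k0) * (arcsin ((1 - k1) / a) - arcsin ((1 - k2) / a))"
        using GG unfolding f_def by simp
    qed
  qed
qed

end
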